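(* Let $\mathcal{M}_{(1,1,1)}\subset\mathbb{P}^6\times\mathbb{P}^6$ be the closed subvariety of points $((a_1:\dots:a_7),(b_1:\dots:b_7))$ satisfying $\sum_{m,n=1}^7\varepsilon^{imn}b_ma_n=0$ for $i=1,\dots,7$. Identifying $\mathbb{P}^6$ with the space of lines in $\operatorname{Im}\mathbb{O}_k$ by $(a_1:\dots:a_7)\mapsto[\sum a_io_i]$, one has $$\mathcal{M}_{(1,1,1)}=\{([u],[v])\in\mathbb{P}^6\times\mathbb{P}^6\mid \operatorname{Im}(uv)=0\}.$$
   Context: Let $k$ be a field of characteristic $\ne2$. Label the points of the Fano plane by $1,\dots,7$ so that its directed lines are $123,145,167,246,275,374,365$; for $i,j,l$ put $\varepsilon^{ijl}=1$ if $(i,j,l)$ is a cyclic rotation of a directed line, $-1$ if $(j,i,l)$ is, and $0$ otherwise. $\mathbb{O}_k$ is the unital non-associative algebra with basis $1,o_1,\dots,o_7$ and $o_ro_s=\sum_i\varepsilon^{rsi}o_i-\delta_{rs}$; $\operatorname{Im}\mathbb{O}_k=\operatorname{span}(o_i)$; conjugation fixes $1$ and negates each $o_i$, and $\operatorname{Im}(u)=\tfrac12(u-\bar u)$. (The seven equations are the relations of the quiver with arrows $v_1,\dots,v_7$ from vertex 1 to 2 and $u_1,\dots,u_7$ from 2 to 3, evaluated on a representation of dimension $(1,1,1)$ with $v_n\mapsto a_n$, $u_m\mapsto b_m$.) *)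

theory Defs
  imports Main
begin

definition fano_lines :: "(nat \<times> nat \<times> nat) list" where
  "fano_lines = [(1,2,3),(1,4,5),(1,6,7),(2,4,6),(2,7,5),(3,7,4),(3,6,5)]"

definition cyc_line :: "nat \<Rightarrow> nat \<Rightarrow> nat \<Rightarrow> bool" where
  "cyc_line i j l \<longleftrightarrow> (i,j,l) \<in> set fano_lines \<or> (j,l,i) \<in> set fano_lines \<or> (l,i,j) \<in> set fano_lines"

definition eps :: "nat \<Rightarrow> nat \<Rightarrow> nat \<Rightarrow> int" where
  "eps i j l = (if cyc_line i j l then 1 else if cyc_line j i l then -1 else 0)"

text \<open>Octonions over a field: coordinate functions, index 0 = unit 1, index r = o_r (r=1..7),
  all other coordinates zero.\<close>
type_synonym 'a oct = "nat \<Rightarrow> 'a"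

definition oct_basis :: "nat \<Rightarrow> 'a::field oct" where
  "oct_basis p = (\<lambda>i. if i = p then 1 else 0)"

definition oct_basis_mult :: "nat \<Rightarrow> nat \<Rightarrow> 'a::field oct" where
  "oct_basis_mult p q =
     (if p = 0 then oct_basis q
      else if q = 0 then oct_basis p
      else (\<lambda>i. if i \<in> {1..7} then of_int (eps p q i)
                else if i = 0 then (if p = q then -1 else 0) else 0))"

definition oct_mult :: "'a::field oct \<Rightarrow> 'a oct \<Rightarrow> 'a oct" where
  "oct_mult x y = (\<lambda>i. \<Sum>p\<in>{0..7}. \<Sum>q\<in>{0..7}. x p * y q * oct_basis_mult p q i)"

definition oct_conj :: "'a::field oct \<Rightarrow> 'a oct" where
  "oct_conj x = (\<lambda>i. if i = 0 then x 0 else - x i)"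

definition oct_Im :: "'a::field oct \<Rightarrow> 'a oct" where
  "oct_Im u = (\<lambda>i. (u i - oct_conj u i) / 2)"

definition im_oct :: "(nat \<Rightarrow> 'a::field) \<Rightarrow> 'a oct" where
  "im_oct a = (\<lambda>i. if i \<in> {1..7} then a i else 0)"

end

theory Submission
  imports Defs
begin

lemma fl: "(p,q,i) \<in> set fano_lines \<longleftrightarrow> (p,q,i) \<in> {(1,2,3),(1,4,5),(1,6,7),(2,4,6),(2,7,5),(3,7,4),(3,6,5)}"
  unfolding fano_lines_def by simp
lemma cyc_anti: "cyc_line p q i \<Longrightarrow> cyc_line q p i \<Longrightarrow> False"
  apply (unfold cyc_line_def[of p q i] fl)
  apply (simp only: insert_iff empty_iff prod.inject)
  apply (elim disjE conjE)
  apply (simp_all add: cyc_line_def fano_lines_def)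
  done
lemma mult_coord:
  fixes a b :: "nat \<Rightarrow> 'k::field"
  assumes "i \<in> {1..7}"
  shows "oct_mult (im_oct a) (im_oct b) i =
     (\<Sum>p\<in>{1..7}. \<Sum>q\<in>{1..7}. a p * b q * of_int (eps p q i))"
proof -
  have e: "{0..7::nat} = insert 0 {1..7}" by auto
  have "oct_mult (im_oct a) (im_oct b) i =
     (\<Sum>p\<in>{1..7}. \<Sum>q\<in>insert 0 {1..7}. im_oct a p * im_oct b q * oct_basis_mult p q i)"
    unfolding oct_mult_def e by (simp add: im_oct_def)
  also have "\<dots> = (\<Sum>p\<in>{1..7}. \<Sum>q\<in>{1..7}. a p * b q * of_int (eps p q i))"
    using assms by (intro sum.cong[OF refl]) (simp add: im_oct_def oct_basis_mult_def)
  finally show ?thesis .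
qed

lemma mult_coord_big:
  fixes a b :: "nat \<Rightarrow> 'k::field"
  assumes "i > 7"
  shows "oct_mult (im_oct a) (im_oct b) i = 0"
proof -
  have e: "{0..7::nat} = insert 0 {1..7}" by auto
  have "oct_mult (im_oct a) (im_oct b) i =
     (\<Sum>p\<in>{1..7}. \<Sum>q\<in>insert 0 {1..7}. im_oct a p * im_oct b q * oct_basis_mult p q i)"
    unfolding oct_mult_def e by (simp add: im_oct_def)
  also have "\<dots> = (\<Sum>p\<in>{1..7::nat}. \<Sum>q\<in>{1..7::nat}. 0)"
    using assms by (intro sum.cong[OF refl]) (simp add: im_oct_def oct_basis_mult_def)
  finally show ?thesis by simp
qed
lemma cyc_rot: "cyc_line i m n = cyc_line m n i"
  unfolding cyc_line_def by blast
lemma eps_cyc: "eps i m n = eps m n i"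
  unfolding eps_def using cyc_rot[of i m n] cyc_rot[of n m i] by simp
lemma eps_anti: "eps p q i = - eps q p i"
  unfolding eps_def using cyc_anti[of p q i] by auto
lemma eps_swap: "eps i m n = - eps n m i"
  using eps_cyc[of i m n] eps_anti[of m n i] by simp

theorem proposition10p2:
  fixes a b :: "nat \<Rightarrow> 'k::field"
  assumes char: "(2::'k) \<noteq> 0"
    and a_nz: "\<exists>i\<in>{1..7}. a i \<noteq> 0"
    and b_nz: "\<exists>i\<in>{1..7}. b i \<noteq> 0"
  shows "(\<forall>i\<in>{1..7::nat}. (\<Sum>m\<in>{1..7}. \<Sum>n\<in>{1..7}. of_int (eps i m n) * b m * a n) = 0)
     \<longleftrightarrow> oct_Im (oct_mult (im_oct a) (im_oct b)) = (\<lambda>_. 0)"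
proof -
  let ?x = "oct_mult (im_oct a) (im_oct b)"
  have L: "(\<Sum>m\<in>{1..7}. \<Sum>n\<in>{1..7}. of_int (eps i m n) * b m * a n) = - ?x i"
    if "i \<in> {1..7}" for i
  proof -
    have "(\<Sum>m\<in>{1..7::nat}. \<Sum>n\<in>{1..7::nat}. of_int (eps i m n) * b m * a n)
        = (\<Sum>m\<in>{1..7::nat}. \<Sum>n\<in>{1..7::nat}. - (a n * b m * of_int (eps n m i)))"
      by (intro sum.cong refl) (simp add: eps_swap[of i] algebra_simps)
    also have "\<dots> = - (\<Sum>n\<in>{1..7::nat}. \<Sum>m\<in>{1..7::nat}. a n * b m * of_int (eps n m i))"
      by (subst sum.swap) (simp add: sum_negf)
    finally show ?thesis using mult_coord[OF that, of a b] by simp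
  qed
  have Im: "oct_Im ?x j = (if j = 0 then 0 else ?x j)" for j
    using char unfolding oct_Im_def oct_conj_def by (simp add: field_simps) 
  show ?thesis
  proof
    assume H: "\<forall>i\<in>{1..7::nat}. (\<Sum>m\<in>{1..7}. \<Sum>n\<in>{1..7}. of_int (eps i m n) * b m * a n) = 0"
    show "oct_Im ?x = (\<lambda>_. 0)"
    proof
      fix j
      show "oct_Im ?x j = 0"
      proof (cases "j = 0 \<or> j > 7")
        case True thus ?thesis using Im mult_coord_big by auto
      next
        case False
        hence "j \<in> {1..7}" by auto
        thus ?thesis using H L Im by fastforce
      qed
    qed
  next
    assume H: "oct_Im ?x = (\<lambda>_. 0)"
    show "\<forall>i\<in>{1..7::nat}. (\<Sum>m\<in>{1..7}. \<Sum>n\<in>{1..7}. of_int (eps i m n) * b m * a n) = 0"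
    proof
      fix i :: nat assume i: "i \<in> {1..7}"
      have "oct_Im ?x i = 0" using H by simp
      hence "?x i = 0" using Im[of i] i by (simp split: if_splits)
      thus "(\<Sum>m\<in>{1..7}. \<Sum>n\<in>{1..7}. of_int (eps i m n) * b m * a n) = 0"
        using L[OF i] by simp
    qed
  qed
qed

end
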